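(* Let $\rho:\mathbb{R}^3\to\mathbb{R}_{\ge 0}$ be a probability density supported in the closed unit ball of $\mathbb{R}^3$, and let $I_1,I_2$ be its tomographic projections along unit vectors $\mathbf{u}$ and $\mathbf{v}$ respectively, with $\measuredangle(\mathbf{u},\mathbf{v})\in[0,\pi]$ the angle between them. Then $$W_1^R(I_1,I_2)\le 2\sin\big(\measuredangle(\mathbf{u},\mathbf{v})/2\big)\le\measuredangle(\mathbf{u},\mathbf{v}).$$
   Context: For $R\in\mathrm{SO}(3)$ define $(R\rho)(\mathbf{x})=\rho(R^T\mathbf{x})$. The tomographic projection of $\rho$ along a unit vector $\mathbf{u}$ is the function on $\mathbb{R}^2$ given by $I(x,y)=\int_{\mathbb{R}}(R\rho)(x,y,z)\,dz$, where $R\in\mathrm{SO}(3)$ is any rotation with $R\mathbf{u}=(0,0,-1)$; different choices of $R$ change $I$ only by an in-plane rotation. Such a projection is a probability density on $\mathbb{R}^2$. For probability measures $\mu,\nu$ on $\mathbb{R}^2$, $W_1(\mu,\nu)=\inf_{\pi\in\Pi(\mu,\nu)}\int\|a-b\|\,d\pi(a,b)$, with $\Pi(\mu,\nu)$ the set of couplings. For $g\in\mathrm{SO}(2)$ let $(gI)(\mathbf{w})=I(g^T\mathbf{w})$, and define $W_1^R(I_1,I_2)=\min_{g\in\mathrm{SO}(2)}W_1(I_1,gI_2)$. *)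

theory Defs
  imports "HOL-Probability.Probability"
begin

text \<open>Angle between two nonzero vectors, in [0, pi].\<close>
definition vec_angle :: "real^3 \<Rightarrow> real^3 \<Rightarrow> real" where
  "vec_angle u v = arccos ((u \<bullet> v) / (norm u * norm v))"

text \<open>Tomographic projection of rho using rotation R (which should map the
  viewing direction to (0,0,-1)): I(x,y) = integral over z of (R rho)(x,y,z),
  where (R rho)(p) = rho(R^T p).\<close>
definition tomo_proj :: "real^3^3 \<Rightarrow> (real^3 \<Rightarrow> real) \<Rightarrow> real^2 \<Rightarrow> real" where
  "tomo_proj R rho w = (LINT z|lborel. rho (transpose R *v vector [w$1, w$2, z]))"

text \<open>Probability measure on R^2 with density I.\<close>
definition dens_measure :: "(real^2 \<Rightarrow> real) \<Rightarrow> (real^2) measure" where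
  "dens_measure I = density lborel (\<lambda>w. ennreal (I w))"

text \<open>Couplings of two measures on R^2.\<close>
definition couplings :: "(real^2) measure \<Rightarrow> (real^2) measure \<Rightarrow> (((real^2) \<times> (real^2)) measure) set" where
  "couplings \<mu> \<nu> = {\<pi>. prob_space \<pi> \<and> sets \<pi> = sets (borel :: ((real^2) \<times> (real^2)) measure)
      \<and> distr \<pi> borel fst = \<mu> \<and> distr \<pi> borel snd = \<nu>}"

text \<open>Wasserstein-1 distance (value in [0, infinity]).\<close>
definition W1 :: "(real^2) measure \<Rightarrow> (real^2) measure \<Rightarrow> ennreal" where
  "W1 \<mu> \<nu> = (INF \<pi>\<in>couplings \<mu> \<nu>. \<integral>\<^sup>+ p. ennreal (norm (fst p - snd p)) \<partial>\<pi>)"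

text \<open>In-plane rotation action: (g I)(w) = I(g^T w).\<close>
definition rot2 :: "real^2^2 \<Rightarrow> (real^2 \<Rightarrow> real) \<Rightarrow> real^2 \<Rightarrow> real" where
  "rot2 g I w = I (transpose g *v w)"

text \<open>Rotation-invariant W1 between two densities on R^2 (min over SO(2),
  rendered as infimum).\<close>
definition W1R :: "(real^2 \<Rightarrow> real) \<Rightarrow> (real^2 \<Rightarrow> real) \<Rightarrow> ennreal" where
  "W1R I1 I2 = (INF g\<in>{g. rotation_matrix g}. W1 (dens_measure I1) (dens_measure (rot2 g I2)))"

end

theory Submission
  imports Defs
begin

lemma Basis_vec_range: "(Basis :: (real^'n) set) = range (\<lambda>i. axis i 1)"
  by (auto simp: Basis_vec_def)

lemma prod_Basis_vec: "(\<Prod>b\<in>(Basis :: (real^'n) set). f b) = (\<Prod>i\<in>UNIV. f (axis i 1))"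
  unfolding Basis_vec_range
  by (subst prod.reindex) (auto simp: inj_on_def axis_eq_axis)

lemma ball_Basis_vec: "(\<forall>b\<in>(Basis :: (real^'n) set). P b) = (\<forall>i. P (axis i 1))"
  unfolding Basis_vec_range by auto

lemma meas_lin[measurable]: "(\<lambda>x. (A::real^'n^'m) *v x) \<in> borel_measurable borel"
  by (intro borel_measurable_continuous_onI linear_continuous_on matrix_vector_mul_bounded_linear)

lemma lborel_orth:
  fixes A :: "real^3^3"
  assumes A: "orthogonal_matrix A"
  shows "distr lborel borel (\<lambda>x. A *v x) = lborel"
proof (rule lborel_eqI[symmetric])
  show "sets (distr lborel borel ((*v) A)) = sets borel" by simp
  fix l u :: "real^3" assume le: "\<And>b. b \<in> Basis \<Longrightarrow> l \<bullet> b \<le> u \<bullet> b"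
  define T where "T x = transpose A *v x" for x
  have ot: "orthogonal_transformation T"
  proof -
    have "T = (*v) (transpose A)" by (simp add: T_def fun_eq_iff)
    moreover have "linear ((*v) (transpose A))" by (rule matrix_vector_mul_linear)
    moreover have "orthogonal_matrix (transpose A)" using A by (simp only: orthogonal_matrix_transpose)
    ultimately show ?thesis unfolding orthogonal_transformation_matrix matrix_of_matrix_vector_mul by simp
  qed
  have pre: "(\<lambda>x. A *v x) -` box l u = T ` box l u"
  proof -
    have 1: "A *v (T x) = x" for x using A
      unfolding T_def matrix_vector_mul_assoc orthogonal_matrix_def by (simp only: matrix_vector_mul_lid)
    have 2: "T (A *v x) = x" for x using A
      unfolding T_def matrix_vector_mul_assoc orthogonal_matrix_def by (simp only: matrix_vector_mul_lid)
    show ?thesis using 1 2 by (auto intro!: image_eqI)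
  qed
  have bl: "box l u \<in> lmeasurable" by simp
  have Tl: "T ` box l u \<in> lmeasurable" by (rule measurable_orthogonal_image[OF ot bl])
  have Tb: "T ` box l u \<in> sets borel"
    unfolding pre[symmetric] using measurable_sets[OF meas_lin[of A], of "box l u"] by simp
  have "emeasure (distr lborel borel ((*v) A)) (box l u) = emeasure lborel (T ` box l u)"
    by (simp add: emeasure_distr pre)
  also have "\<dots> = emeasure lebesgue (T ` box l u)"
    using Tb by (simp add: emeasure_completion)
  also have "\<dots> = ennreal (measure lebesgue (T ` box l u))"
    using Tl by (intro emeasure_eq_ennreal_measure fmeasurableD2)
  also have "\<dots> = ennreal (measure lebesgue (box l u))"
    by (simp add: measure_orthogonal_image[OF ot bl])
  also have "\<dots> = emeasure lebesgue (box l u)"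
    using bl by (intro emeasure_eq_ennreal_measure[symmetric] fmeasurableD2)
  also have "\<dots> = emeasure lborel (box l u)" by (simp add: emeasure_completion)
  also have "\<dots> = (\<Prod>b\<in>Basis. (u - l) \<bullet> b)" using le by (simp add: emeasure_lborel_box_eq)
  finally show "emeasure (distr lborel borel ((*v) A)) (box l u) = (\<Prod>b\<in>Basis. (u - l) \<bullet> b)" .
qed

definition iso3 :: "(real^2) \<times> real \<Rightarrow> real^3" where
  "iso3 p = vector [fst p $ 1, fst p $ 2, snd p]"

lemma linear_iso3: "linear iso3"
  by (rule linearI) (simp_all add: iso3_def vec_eq_iff forall_3)

lemma meas_iso3[measurable]: "iso3 \<in> borel_measurable borel"
  by (intro borel_measurable_continuous_onI linear_continuous_on linear_iso3[THEN linear_conv_bounded_linear[THEN iffD1]])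

lemma prod_UNIV_2: "(\<Prod>i\<in>(UNIV::2 set). f i) = f 1 * f 2"
  unfolding UNIV_2 by (simp add: ac_simps)
lemma prod_UNIV_3: "(\<Prod>i\<in>(UNIV::3 set). f i) = f 1 * f 2 * f 3"
  unfolding UNIV_3 by (simp add: ac_simps)

lemma lborel_iso3: "distr lborel borel iso3 = lborel"
proof (rule lborel_eqI[symmetric])
  show "sets (distr lborel borel iso3) = sets borel" by simp
  fix l u :: "real^3" assume le: "\<And>b. b \<in> Basis \<Longrightarrow> l \<bullet> b \<le> u \<bullet> b"
  hence le': "l $ i \<le> u $ i" for i using le[of "axis i 1"] by (auto simp: Basis_vec_def inner_axis)
  define L :: "real^2" where "L = vector [l$1, l$2]"
  define U :: "real^2" where "U = vector [u$1, u$2]"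
  have pre: "iso3 -` box l u = box L U \<times> box (l$3) (u$3)"
    by (auto simp: iso3_def mem_box_cart forall_2 forall_3 L_def U_def)
  have "emeasure (distr lborel borel iso3) (box l u) = emeasure (lborel \<Otimes>\<^sub>M lborel) (box L U \<times> box (l$3) (u$3))"
    by (simp add: emeasure_distr pre lborel_prod)
  also have "\<dots> = emeasure lborel (box L U) * emeasure lborel (box (l$3) (u$3))"
    by (simp add: lborel.emeasure_pair_measure_Times)
  also have "emeasure lborel (box L U) = ennreal ((u$1 - l$1) * (u$2 - l$2))"
    using le' by (simp add: emeasure_lborel_box_eq prod_Basis_vec ball_Basis_vec inner_axis prod_UNIV_2 forall_2 L_def U_def)
  also have "emeasure lborel (box (l$3) (u$3)) = ennreal (u$3 - l$3)"
    using le'[of 3] by simp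
  also have "ennreal ((u$1 - l$1) * (u$2 - l$2)) * ennreal (u$3 - l$3) = ennreal (\<Prod>b\<in>Basis. (u - l) \<bullet> b)"
    using le'[of 1] le'[of 2] le'[of 3]
    by (simp add: prod_Basis_vec inner_axis prod_UNIV_3 ennreal_mult'[symmetric])
  finally show "emeasure (distr lborel borel iso3) (box l u) = (\<Prod>b\<in>Basis. (u - l) \<bullet> b)" .
qed


definition P2 :: "real^3 \<Rightarrow> real^2" where "P2 y = vector [y$1, y$2]"

lemma linear_P2: "linear P2"
  by (rule linearI) (simp_all add: P2_def vec_eq_iff forall_2)

lemma meas_P2[measurable]: "P2 \<in> borel_measurable borel"
  by (intro borel_measurable_continuous_onI linear_continuous_on linear_P2[THEN linear_conv_bounded_linear[THEN iffD1]])

lemma P2_iso3: "P2 (iso3 p) = fst p"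
  by (simp add: P2_def iso3_def vec_eq_iff forall_2)

lemma marg_fst:
  fixes g :: "(real^2) \<times> real \<Rightarrow> ennreal"
  assumes g[measurable]: "g \<in> borel_measurable (lborel \<Otimes>\<^sub>M lborel)"
  shows "distr (density (lborel \<Otimes>\<^sub>M lborel) g) borel fst = density lborel (\<lambda>w. \<integral>\<^sup>+z. g (w, z) \<partial>lborel)"
proof (rule measure_eqI)
  show "sets (distr (density (lborel \<Otimes>\<^sub>M lborel) g) borel fst) = sets (density lborel (\<lambda>w. \<integral>\<^sup>+z. g (w, z) \<partial>lborel))"
    by simp
  fix B assume "B \<in> sets (distr (density (lborel \<Otimes>\<^sub>M lborel) g) borel fst)"
  hence B[measurable]: "B \<in> sets borel" by simp
  have "emeasure (distr (density (lborel \<Otimes>\<^sub>M lborel) g) borel fst) B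
      = emeasure (density (lborel \<Otimes>\<^sub>M lborel) g) (fst -` B)"
    by (simp add: emeasure_distr space_pair_measure)
  also have "\<dots> = (\<integral>\<^sup>+p. g p * indicator (fst -` B) p \<partial>(lborel \<Otimes>\<^sub>M lborel))"
  proof (rule emeasure_density)
    have "fst -` B = B \<times> (UNIV :: real set)" by auto
    moreover have "B \<times> (UNIV :: real set) \<in> sets (lborel \<Otimes>\<^sub>M (lborel :: real measure))"
      by (rule pair_measureI) auto
    ultimately show "fst -` B \<in> sets (lborel \<Otimes>\<^sub>M (lborel :: real measure))" by metis
  qed simp
  also have "\<dots> = (\<integral>\<^sup>+w. \<integral>\<^sup>+z. g (w, z) * indicator B w \<partial>lborel \<partial>lborel)"
    by (subst lborel.nn_integral_fst[symmetric]) (auto simp: indicator_def)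
  also have "\<dots> = (\<integral>\<^sup>+w. (\<integral>\<^sup>+z. g (w, z) \<partial>lborel) * indicator B w \<partial>lborel)"
    by (simp add: nn_integral_multc)
  also have "\<dots> = emeasure (density lborel (\<lambda>w. \<integral>\<^sup>+z. g (w, z) \<partial>lborel)) B"
    by (rule emeasure_density[symmetric]) auto
  finally show "emeasure (distr (density (lborel \<Otimes>\<^sub>M lborel) g) borel fst) B
      = emeasure (density lborel (\<lambda>w. \<integral>\<^sup>+z. g (w, z) \<partial>lborel)) B" .
qed

lemma orth_TA: "orthogonal_matrix A \<Longrightarrow> transpose A *v (A *v x) = x"
  unfolding matrix_vector_mul_assoc orthogonal_matrix_def by (simp only: matrix_vector_mul_lid)

lemma proj_density:
  fixes rho :: "real^3 \<Rightarrow> real" and A :: "real^3^3"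
  assumes A: "orthogonal_matrix A" and rm[measurable]: "rho \<in> borel_measurable borel"
    and nn: "\<And>x. rho x \<ge> 0" and int: "integrable lborel rho"
  shows "distr (density lborel (\<lambda>x. ennreal (rho x))) borel (\<lambda>x. P2 (A *v x)) = dens_measure (tomo_proj A rho)"
proof -
  define r where "r x = rho (transpose A *v x)" for x
  have AT: "orthogonal_matrix (transpose A)" using A by (simp only: orthogonal_matrix_transpose)
  have rm'[measurable]: "r \<in> borel_measurable borel" unfolding r_def by measurable
  have s1: "distr (density lborel (\<lambda>x. ennreal (rho x))) borel ((*v) A) = density lborel (\<lambda>x. ennreal (r x))"
  proof -
    have "density lborel (\<lambda>x. ennreal (r x)) = density (distr lborel borel ((*v) A)) (\<lambda>x. ennreal (r x))"
      by (simp add: lborel_orth[OF A])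
    also have "\<dots> = distr (density lborel (\<lambda>x. ennreal (r (A *v x)))) borel ((*v) A)"
      by (rule density_distr) auto
    also have "(\<lambda>x. ennreal (r (A *v x))) = (\<lambda>x. ennreal (rho x))"
      by (simp only: r_def orth_TA[OF A])
    finally show ?thesis by simp
  qed
  have "distr (density lborel (\<lambda>x. ennreal (rho x))) borel (\<lambda>x. P2 (A *v x))
      = distr (distr (density lborel (\<lambda>x. ennreal (rho x))) borel ((*v) A)) borel P2"
    by (subst distr_distr) (auto simp: comp_def)
  also have "\<dots> = distr (density lborel (\<lambda>x. ennreal (r x))) borel P2" by (simp add: s1)
  also have "density lborel (\<lambda>x. ennreal (r x)) = density (distr lborel borel iso3) (\<lambda>x. ennreal (r x))"
    by (simp add: lborel_iso3)
  also have "\<dots> = distr (density lborel (\<lambda>p. ennreal (r (iso3 p)))) borel iso3"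
    by (rule density_distr) auto
  also have "distr \<dots> borel P2 = distr (density lborel (\<lambda>p. ennreal (r (iso3 p)))) borel fst"
    by (subst distr_distr) (auto simp: comp_def P2_iso3)
  also have "\<dots> = distr (density (lborel \<Otimes>\<^sub>M lborel) (\<lambda>p. ennreal (r (iso3 p)))) borel fst"
    by (simp add: lborel_prod)
  also have "\<dots> = density lborel (\<lambda>w. \<integral>\<^sup>+z. ennreal (r (iso3 (w, z))) \<partial>lborel)"
    by (rule marg_fst) (simp only: lborel_prod measurable_lborel2, measurable)
  also have "\<dots> = density lborel (\<lambda>w. ennreal (tomo_proj A rho w))"
  proof (rule density_cong)
    show "(\<lambda>w. \<integral>\<^sup>+z. ennreal (r (iso3 (w, z))) \<partial>lborel) \<in> borel_measurable lborel"
      by (rule lborel.borel_measurable_nn_integral) (simp add: lborel_prod[symmetric])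
    have tp: "tomo_proj A rho w = (\<integral>z. r (iso3 (w, z)) \<partial>lborel)" for w
      by (simp add: tomo_proj_def r_def iso3_def)
    show "(\<lambda>w. ennreal (tomo_proj A rho w)) \<in> borel_measurable lborel"
      unfolding tp
      by (intro measurable_compose[OF _ measurable_ennreal] lborel.borel_measurable_lebesgue_integral)
         (simp add: lborel_prod[symmetric])
    have i1: "integrable lborel r"
    proof -
      have "integrable (distr lborel borel ((*v) (transpose A))) rho"
        using int by (simp add: lborel_orth[OF AT])
      thus ?thesis unfolding r_def[abs_def] by (subst (asm) integrable_distr_eq) auto
    qed
    have i2: "integrable (lborel \<Otimes>\<^sub>M lborel) (\<lambda>p. r (iso3 p))"
    proof -
      have "integrable (distr lborel borel iso3) r" using i1 by (simp add: lborel_iso3)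
      hence "integrable lborel (\<lambda>p. r (iso3 p))" by (subst (asm) integrable_distr_eq) auto
      thus ?thesis by (simp add: lborel_prod)
    qed
    have "AE w in lborel. integrable lborel (\<lambda>z. r (iso3 (w, z)))"
      using lborel_pair.AE_integrable_fst'[OF i2] by simp
    then show "AE w in lborel. (\<integral>\<^sup>+z. ennreal (r (iso3 (w, z))) \<partial>lborel) = ennreal (tomo_proj A rho w)"
    proof eventually_elim
      case (elim w)
      show ?case unfolding tp
        by (rule nn_integral_eq_integral[OF elim]) (simp add: r_def nn)
    qed
  qed
  finally show ?thesis by (simp add: dens_measure_def)
qed

context includes cross3_syntax
begin

lemma rot_from:
  fixes f :: "real^3 \<Rightarrow> real^3"
  assumes lin: "linear f" and nrm: "\<And>x. norm (f x) = norm x"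
    and cr: "f a \<times> f b = f (a \<times> b)" and nz: "a \<times> b \<noteq> 0"
  shows "rotation_matrix (matrix f)"
proof -
  have ot: "orthogonal_transformation f" using lin nrm by (simp add: orthogonal_transformation)
  hence om: "orthogonal_matrix (matrix f)" using orthogonal_transformation_matrix by blast
  have mv: "\<And>x. matrix f *v x = f x" using lin by (simp add: matrix_works)
  have "f (a \<times> b) = det (matrix f) *\<^sub>R f (a \<times> b)"
    using cross_orthogonal_matrix[OF om, of a b] cr by (simp add: mv)
  moreover have "f (a \<times> b) \<noteq> 0" using nrm[of "a \<times> b"] nz by auto
  ultimately have "det (matrix f) = 1"
    by (metis scaleR_cancel_right scaleR_one)
  thus ?thesis using om by (simp add: rotation_matrix_def)
qed

lemma cross_cross1: "(u \<times> v) \<times> w = (u \<bullet> w) *\<^sub>R v - (v \<bullet> w) *\<^sub>R u"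
  by (simp add: cross3_simps forall_3)

lemma cross_sq: "(k \<times> x) \<bullet> (k \<times> x) = (k \<bullet> k) * (x \<bullet> x) - (k \<bullet> x)^2"
  by (simp add: cross3_simps power2_eq_square)

lemma aux_rod: "1 + (c::real) > 0 \<Longrightarrow> c^2*X + ((1-c^2)*X - t^2) + (t/(1+c))^2*(1-c^2) + 2*c*(t/(1+c))*t = X"
proof -
  assume h: "1 + c > 0"
  define d where "d = 1 + c"
  have c: "c = d - 1" "d \<noteq> 0" using h by (auto simp: d_def)
  show ?thesis unfolding c(1) using c(2) by (simp add: field_simps power2_eq_square)
qed

lemma exists_S_generic:
  fixes u v :: "real^3"
  assumes u: "norm u = 1" and v: "norm v = 1" and ne: "u \<noteq> v" "u \<noteq> -v"
  shows "\<exists>S. rotation_matrix S \<and> S *v u = v \<and> (\<forall>x. norm (x - S *v x) \<le> norm (u - v) * norm x)"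
proof -
  define c where "c = u \<bullet> v"
  define k where "k = u \<times> v"
  define f where "f x = c *\<^sub>R x + k \<times> x + ((k \<bullet> x) / (1 + c)) *\<^sub>R k" for x
  have uu: "u \<bullet> u = 1" using u by (simp add: dot_square_norm)
  have vv: "v \<bullet> v = 1" using v by (simp add: dot_square_norm)
  have nuv: "(norm (u - v))^2 = 2 - 2 * c"
    by (simp add: power2_norm_eq_inner inner_diff uu vv c_def inner_commute)
  have npuv: "(norm (u + v))^2 = 2 + 2 * c"
    by (simp add: power2_norm_eq_inner inner_add uu vv c_def inner_commute)
  have "c \<noteq> -1" proof
    assume "c = -1" hence "norm (u + v) = 0" using npuv by simp
    thus False using ne by (simp add: eq_neg_iff_add_eq_0)
  qed
  moreover have "c \<ge> -1" using npuv by (smt (verit) zero_le_power2)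
  ultimately have cpos: "1 + c > 0" by simp
  have "c \<noteq> 1" proof
    assume "c = 1" hence "norm (u - v) = 0" using nuv by simp
    thus False using ne by simp
  qed
  have kk: "k \<bullet> k = 1 - c^2"
    using norm_cross_dot[of u v] u v by (simp add: k_def c_def power2_norm_eq_inner)
  have knz: "k \<noteq> 0" using kk \<open>c \<noteq> 1\<close> \<open>c \<noteq> -1\<close>
    by (auto simp: power2_eq_square) (metis (no_types, opaque_lifting) add.inverse_inverse add_diff_cancel_left' diff_add_cancel diff_minus_eq_add mult_cancel_left1 square_eq_1_iff)
  have lin: "linear f"
    by (rule linearI) (simp_all add: f_def cross_add_right cross_mult_right inner_add_right
       add_divide_distrib scaleR_add_left algebra_simps)
  have kx: "\<And>x. k \<bullet> (k \<times> x) = 0" "\<And>x. x \<bullet> (k \<times> x) = 0" "\<And>x. (k \<times> x) \<bullet> k = 0" "\<And>x. (k \<times> x) \<bullet> x = 0"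
    by (simp_all add: cross3_simps)
  have ff: "f x \<bullet> f x = x \<bullet> x" for x
  proof -
    have "f x \<bullet> f x = c^2 * (x \<bullet> x) + (k \<times> x) \<bullet> (k \<times> x) + ((k \<bullet> x) / (1 + c))^2 * (k \<bullet> k)
        + 2 * c * ((k \<bullet> x) / (1 + c)) * (k \<bullet> x)"
      unfolding f_def by (simp add: inner_add inner_commute kx power2_eq_square algebra_simps)
    also have "\<dots> = x \<bullet> x" unfolding cross_sq kk using aux_rod[OF cpos] by simp
    finally show ?thesis .
  qed
  have nrm: "norm (f x) = norm x" for x using ff[of x] by (simp add: norm_eq_sqrt_inner)
  have xf: "x \<bullet> f x \<ge> c * (x \<bullet> x)" for x
  proof -
    have "x \<bullet> f x = c * (x \<bullet> x) + (k \<bullet> x)^2 / (1 + c)"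
      unfolding f_def by (simp add: inner_add kx inner_commute power2_eq_square)
    thus ?thesis using cpos by simp
  qed
  have fu: "f u = v"
  proof -
    have "k \<bullet> u = 0" by (simp add: k_def cross3_simps)
    moreover have "k \<times> u = v - c *\<^sub>R u" unfolding k_def c_def cross_cross1 using uu
      by (simp add: inner_commute)
    ultimately show ?thesis by (simp add: f_def)
  qed
  have fv: "f v = (2 * c) *\<^sub>R v - u"
  proof -
    have "k \<bullet> v = 0" by (simp add: k_def cross3_simps)
    moreover have "k \<times> v = c *\<^sub>R v - u" unfolding k_def c_def cross_cross1 using vv
      by (simp add: inner_commute)
    ultimately show ?thesis by (simp add: f_def scaleR_2 flip: scaleR_scaleR)
  qed
  have fk: "f k = k"
  proof -
    have "f k = (c + (1 - c^2) / (1 + c)) *\<^sub>R k" by (simp add: f_def kk algebra_simps)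
    also have "c + (1 - c^2) / (1 + c) = 1" using cpos by (simp add: field_simps power2_eq_square)
    finally show ?thesis by simp
  qed
  have uk: "u \<times> k = c *\<^sub>R u - v"
    unfolding k_def by (subst cross_skew) (simp add: cross_cross1 uu c_def inner_commute)
  have cr: "f u \<times> f k = f (u \<times> k)"
  proof -
    have "f u \<times> f k = v \<times> (u \<times> v)" by (simp add: fu fk, simp add: k_def)
    also have "\<dots> = u - c *\<^sub>R v" by (subst cross_skew) (simp add: cross_cross1 vv c_def inner_commute)
    also have "\<dots> = f (u \<times> k)" unfolding uk
      by (simp add: linear_diff[OF lin] linear_cmul[OF lin] fu fv algebra_simps scaleR_2 flip: scaleR_scaleR)
    finally show ?thesis .
  qed
  have uknz: "u \<times> k \<noteq> 0"
  proof
    assume "u \<times> k = 0"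
    hence "v = c *\<^sub>R u" using uk by simp
    hence "k = 0" by (simp add: k_def cross_mult_right)
    thus False using knz by simp
  qed
  have rot: "rotation_matrix (matrix f)" by (rule rot_from[OF lin nrm cr uknz])
  have mv: "\<And>x. matrix f *v x = f x" using lin by (simp add: matrix_works)
  have bound: "norm (x - f x) \<le> norm (u - v) * norm x" for x
  proof -
    have "(norm (x - f x))^2 = 2 * (x \<bullet> x) - 2 * (x \<bullet> f x)"
      using ff[of x] by (simp add: power2_norm_eq_inner inner_diff inner_commute)
    also have "\<dots> \<le> (2 - 2 * c) * (x \<bullet> x)" using xf[of x] by (simp add: algebra_simps)
    also have "\<dots> = (norm (u - v) * norm x)^2" by (simp add: power_mult_distrib nuv[symmetric]) (simp add: power2_norm_eq_inner)
    finally show ?thesis by (rule power2_le_imp_le) simp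
  qed
  show ?thesis using rot mv fu bound by metis
qed

lemma exists_perp:
  fixes u :: "real^3"
  shows "\<exists>n. norm n = 1 \<and> n \<bullet> u = 0"
proof (cases "u$1 = 0 \<and> u$2 = 0")
  case True
  then show ?thesis by (intro exI[of _ "axis 1 1"]) (simp add: inner_axis')
next
  case False
  define w :: "real^3" where "w = vector [- u$2, u$1, 0]"
  have "w \<noteq> 0" using False by (auto simp: w_def vec_eq_iff forall_3)
  moreover have "w \<bullet> u = 0" by (simp add: w_def inner_vec_def sum_3)
  ultimately show ?thesis by (intro exI[of _ "w /\<^sub>R norm w"]) simp
qed

lemma exists_S_anti:
  fixes u :: "real^3"
  assumes u: "norm u = 1"
  shows "\<exists>S. rotation_matrix S \<and> S *v u = - u \<and> (\<forall>x. norm (x - S *v x) \<le> norm (u - - u) * norm x)"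
proof -
  obtain n where n: "norm n = 1" "n \<bullet> u = 0" using exists_perp by blast
  have nn: "n \<bullet> n = 1" using n by (simp add: dot_square_norm)
  define f where "f x = (2 * (n \<bullet> x)) *\<^sub>R n - x" for x
  have lin: "linear f"
    by (rule linearI) (simp_all add: f_def inner_add_right algebra_simps)
  have ff: "f x \<bullet> f x = x \<bullet> x" for x
    unfolding f_def by (simp add: inner_diff inner_commute nn algebra_simps power2_eq_square)
  have nrm: "norm (f x) = norm x" for x using ff[of x] by (simp add: norm_eq_sqrt_inner)
  have fu: "f u = - u" using n by (simp add: f_def inner_commute)
  have fn: "f n = n" using nn by (simp add: f_def scaleR_2)
  have un: "n \<bullet> (u \<times> n) = 0" by (simp add: dot_cross_self)
  have fcr: "f (u \<times> n) = - (u \<times> n)" using un by (simp add: f_def)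
  have cr: "f u \<times> f n = f (u \<times> n)" by (simp add: fu fn fcr)
  have "(norm (u \<times> n))^2 = 1" using norm_cross_dot[of u n] u n by (simp add: inner_commute)
  hence nz: "u \<times> n \<noteq> 0" by auto
  have rot: "rotation_matrix (matrix f)" by (rule rot_from[OF lin nrm cr nz])
  have mv: "\<And>x. matrix f *v x = f x" using lin by (simp add: matrix_works)
  have bound: "norm (x - f x) \<le> norm (u - - u) * norm x" for x
  proof -
    have e: "x - f x = (2::real) *\<^sub>R (x - (n \<bullet> x) *\<^sub>R n)" by (simp add: f_def scaleR_diff_right scaleR_2 flip: scaleR_scaleR)
    have "(norm (x - (n \<bullet> x) *\<^sub>R n))^2 = x \<bullet> x - (n \<bullet> x)^2"
      by (simp only: power2_norm_eq_inner) (simp add: inner_diff inner_commute nn power2_eq_square algebra_simps)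
    also have "\<dots> \<le> (norm x)^2" by (simp add: power2_norm_eq_inner)
    finally have "norm (x - (n \<bullet> x) *\<^sub>R n) \<le> norm x" by (rule power2_le_imp_le) simp
    moreover have "norm (u - - u) = 2" using u by (simp add: scaleR_2[symmetric])
    ultimately show ?thesis unfolding e by simp
  qed
  show ?thesis using rot mv fu bound by metis
qed

lemma exists_S:
  fixes u v :: "real^3"
  assumes u: "norm u = 1" and v: "norm v = 1"
  shows "\<exists>S. rotation_matrix S \<and> S *v u = v \<and> (\<forall>x. norm (x - S *v x) \<le> norm (u - v) * norm x)"
proof -
  consider "u = v" | "u = - v" | "u \<noteq> v" "u \<noteq> - v" by blast
  then show ?thesis
  proof cases
    case 1
    have "rotation_matrix (mat 1 :: real^3^3)"
      by (simp add: rotation_matrix_def orthogonal_matrix_id det_I)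
    then show ?thesis using 1 by (intro exI[of _ "mat 1"]) simp
  next
    case 2
    then show ?thesis using exists_S_anti[OF u] by simp
  next
    case 3
    then show ?thesis using exists_S_generic[OF u v] by blast
  qed
qed

end

lemma orth_norm: "orthogonal_matrix (A::real^'n^'n) \<Longrightarrow> norm (A *v x) = norm x"
proof -
  assume A: "orthogonal_matrix A"
  have "orthogonal_transformation ((*v) A)"
    unfolding orthogonal_transformation_matrix matrix_of_matrix_vector_mul
    using A matrix_vector_mul_linear by blast
  thus ?thesis by (rule orthogonal_transformation_norm)
qed

lemma norm_P2: "norm (P2 y) \<le> norm y"
proof -
  have "(norm (P2 y))^2 \<le> (norm y)^2"
    by (simp add: power2_norm_eq_inner inner_vec_def sum_2 sum_3 P2_def)
  thus ?thesis by (rule power2_le_imp_le) simp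
qed

lemma P2_diff: "P2 a - P2 b = P2 (a - b)"
  by (simp add: P2_def vec_eq_iff forall_2)

lemma angle_eq:
  fixes u v :: "real^3"
  assumes u: "norm u = 1" and v: "norm v = 1"
  shows "norm (u - v) = 2 * sin (vec_angle u v / 2)" and "2 * sin (vec_angle u v / 2) \<le> vec_angle u v"
proof -
  define c where "c = u \<bullet> v"
  have cb: "\<bar>c\<bar> \<le> 1" using Cauchy_Schwarz_ineq2[of u v] u v unfolding c_def by simp
  have cb': "-1 \<le> c" "c \<le> 1" using cb by auto
  have th: "vec_angle u v = arccos c" unfolding vec_angle_def u v c_def by simp
  define t where "t = arccos c"
  have t0: "0 \<le> t" "t \<le> pi" unfolding t_def using arccos_lbound[OF cb'] arccos_ubound[OF cb'] by auto
  have ct: "cos t = c" unfolding t_def using cos_arccos[OF cb'] .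
  have s0: "sin (t / 2) \<ge> 0" using t0 by (intro sin_ge_zero) auto
  have h2: "2 * (t/2) = t" by simp
  have e: "cos t = 1 - 2 * sin (t/2) ^ 2" using cos_double_sin[of "t/2"] unfolding h2 .
  have ss: "2 * (sin (t/2))^2 = 1 - c" using e ct by linarith
  have "(norm (u - v))^2 = 2 - 2 * c"
  proof -
    have uu: "u \<bullet> u = 1" using u by (simp add: dot_square_norm)
    have vv: "v \<bullet> v = 1" using v by (simp add: dot_square_norm)
    show ?thesis by (simp add: power2_norm_eq_inner inner_diff c_def inner_commute uu vv)
  qed
  also have "\<dots> = (2 * sin (t/2))^2"
  proof -
    have "(2 * sin (t/2))^2 = 4 * (sin (t/2))^2" by (simp add: power_mult_distrib)
    thus ?thesis using ss by linarith
  qed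
  finally have eq: "(norm (u - v))^2 = (2 * sin (t/2))^2" .
  have "norm (u - v) = 2 * sin (t/2)"
    using power2_eq_iff_nonneg[of "norm (u-v)" "2 * sin (t/2)"] s0 eq by auto
  thus "norm (u - v) = 2 * sin (vec_angle u v / 2)" unfolding th t_def[symmetric] .
  have "t/2 \<ge> 0" using t0 by simp
  hence "sin (t/2) \<le> t/2" by (rule sin_x_le_x)
  hence "2 * sin (t/2) \<le> t" by linarith
  thus "2 * sin (vec_angle u v / 2) \<le> vec_angle u v" unfolding th t_def[symmetric] .
qed
lemma orth_AT: "orthogonal_matrix A \<Longrightarrow> A *v (transpose A *v x) = x"
  unfolding matrix_vector_mul_assoc orthogonal_matrix_def by (simp only: matrix_vector_mul_lid)

lemma block:
  fixes M :: "real^3^3"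
  assumes om: "orthogonal_matrix M" and dM: "det M = 1"
    and Me: "M *v vector [0, 0, 1] = vector [0, 0, 1]"
  defines "g \<equiv> (vector [vector [M$1$1, M$1$2], vector [M$2$1, M$2$2]] :: real^2^2)"
  shows "rotation_matrix g"
    and "\<And>w z. transpose M *v vector [w$1, w$2, z] = vector [(transpose g *v w)$1, (transpose g *v w)$2, z]"
proof -
  have MeT: "transpose M *v vector [0, 0, 1] = vector [0, 0, 1]"
    using orth_TA[OF om, of "vector [0, 0, 1]"] Me by simp
  have z1: "M$1$3 = 0" "M$2$3 = 0" "M$3$3 = 1"
    using Me by (simp_all add: matrix_vector_mult_def sum_3 vec_eq_iff forall_3)
  have z2: "M$3$1 = 0" "M$3$2 = 0"
    using MeT by (simp_all add: matrix_vector_mult_def transpose_def sum_3 vec_eq_iff forall_3)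
  have T1: "(\<Sum>k\<in>UNIV. M$k$i * M$k$j) = (if i = j then 1 else 0)" for i j
  proof -
    have "(transpose M ** M) $ i $ j = mat 1 $ i $ j" using om by (simp add: orthogonal_matrix_def)
    thus ?thesis by (simp add: matrix_matrix_mult_def transpose_def mat_def)
  qed
  have T2: "(\<Sum>k\<in>UNIV. M$i$k * M$j$k) = (if i = j then 1 else 0)" for i j
  proof -
    have "(M ** transpose M) $ i $ j = mat 1 $ i $ j" using om by (simp add: orthogonal_matrix_def)
    thus ?thesis by (simp add: matrix_matrix_mult_def transpose_def mat_def)
  qed
  note T = T1[of 1 1, unfolded sum_3] T1[of 1 2, unfolded sum_3] T1[of 2 2, unfolded sum_3] T1[of 2 1, unfolded sum_3]
    T2[of 1 1, unfolded sum_3] T2[of 1 2, unfolded sum_3] T2[of 2 2, unfolded sum_3] T2[of 2 1, unfolded sum_3]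
  have og: "orthogonal_matrix g"
    unfolding orthogonal_matrix_def using T z1 z2
    by (simp add: g_def vec_eq_iff forall_2 matrix_matrix_mult_def transpose_def mat_def sum_2 mult.commute)
  have "det g = det M" using z1 z2 by (simp add: det_2 det_3 g_def)
  thus "rotation_matrix g" using og dM by (simp add: rotation_matrix_def)
  show "transpose M *v vector [w$1, w$2, z] = vector [(transpose g *v w)$1, (transpose g *v w)$2, z]" for w z
    using z1 z2 by (simp add: g_def vec_eq_iff forall_3 matrix_vector_mult_def transpose_def sum_2 sum_3)
qed


lemma mv_neg: "(A::real^'n^'m) *v (- x) = - (A *v x)"
  using linear_neg[OF matrix_vector_mul_linear] .

lemma fst_bm[measurable]: "(fst :: (real^2) \<times> (real^2) \<Rightarrow> real^2) \<in> borel_measurable borel"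
  unfolding borel_prod[symmetric] by simp

lemma snd_bm[measurable]: "(snd :: (real^2) \<times> (real^2) \<Rightarrow> real^2) \<in> borel_measurable borel"
  unfolding borel_prod[symmetric] by simp

theorem lemma2:
  fixes rho :: "real^3 \<Rightarrow> real" and u v :: "real^3" and R1 R2 :: "real^3^3"
  assumes "rho \<in> borel_measurable lborel"
    and "\<And>x. rho x \<ge> 0"
    and "integrable lborel rho"
    and "(LINT x|lborel. rho x) = 1"
    and "\<And>x. norm x > 1 \<Longrightarrow> rho x = 0"
    and "norm u = 1" and "norm v = 1"
    and "rotation_matrix R1" and "R1 *v u = vector [0, 0, -1]"
    and "rotation_matrix R2" and "R2 *v v = vector [0, 0, -1]"
  shows "W1R (tomo_proj R1 rho) (tomo_proj R2 rho)
           \<le> ennreal (2 * sin (vec_angle u v / 2))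
       \<and> 2 * sin (vec_angle u v / 2) \<le> vec_angle u v"
proof -
  note rm = assms(1) and nn = assms(2) and int = assms(3) and one = assms(4) and supp = assms(5)
  have rmb[measurable]: "rho \<in> borel_measurable borel" using rm by simp
  obtain S where S: "rotation_matrix S" "S *v u = v" "\<And>x. norm (x - S *v x) \<le> norm (u - v) * norm x"
    using exists_S[OF assms(6,7)] by blast
  have oS: "orthogonal_matrix S" using S(1) by (simp add: rotation_matrix_def)
  have oR1: "orthogonal_matrix R1" using assms(8) by (simp add: rotation_matrix_def)
  have oR2: "orthogonal_matrix R2" using assms(10) by (simp add: rotation_matrix_def)
  define M where "M = R1 ** transpose S ** transpose R2"
  have oM: "orthogonal_matrix M" unfolding M_def
    by (intro orthogonal_matrix_mul oR1 oS oR2 iffD2[OF orthogonal_matrix_transpose])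
  have dM: "det M = 1" unfolding M_def using assms(8,10) S(1)
    by (simp add: det_mul rotation_matrix_def)
  have e3: "vector [0, 0, 1] = - (vector [0, 0, -1] :: real^3)" by (simp add: vec_eq_iff forall_3)
  have a1: "transpose R2 *v vector [0, 0, -1] = v" using orth_TA[OF oR2, of v] assms(11) by simp
  have a2: "transpose S *v v = u" using orth_TA[OF oS, of u] S(2) by simp
  have Me: "M *v vector [0, 0, 1] = vector [0, 0, 1]"
  proof -
    have "M *v vector [0, 0, 1] = R1 *v (transpose S *v (transpose R2 *v vector [0, 0, 1]))"
      unfolding M_def by (simp only: matrix_vector_mul_assoc matrix_mul_assoc)
    also have "\<dots> = vector [0, 0, 1]"
      unfolding e3 mv_neg a1 a2 assms(9) ..
    finally show ?thesis .
  qed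
  define g where "g = (vector [vector [M$1$1, M$1$2], vector [M$2$1, M$2$2]] :: real^2^2)"
  have rg: "rotation_matrix g" unfolding g_def by (rule block(1)[OF oM dM Me])
  have gM: "\<And>w z. transpose M *v vector [w$1, w$2, z] = vector [(transpose g *v w)$1, (transpose g *v w)$2, z]"
    unfolding g_def by (rule block(2)[OF oM dM Me])
  have oMR: "orthogonal_matrix (M ** R2)" by (rule orthogonal_matrix_mul[OF oM oR2])
  have rot: "rot2 g (tomo_proj R2 rho) = tomo_proj (M ** R2) rho"
  proof
    fix w
    have "transpose (M ** R2) *v vector [w$1, w$2, z] = transpose R2 *v vector [(transpose g *v w)$1, (transpose g *v w)$2, z]" for z
      unfolding matrix_transpose_mul matrix_vector_mul_assoc[symmetric] gM ..
    thus "rot2 g (tomo_proj R2 rho) w = tomo_proj (M ** R2) rho w"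
      unfolding rot2_def tomo_proj_def by simp
  qed
  define \<mu> where "\<mu> = density lborel (\<lambda>x. ennreal (rho x))"
  define f where "f x = (P2 (R1 *v x), P2 ((M ** R2) *v x))" for x
  have fm[measurable]: "f \<in> borel_measurable borel"
    unfolding f_def[abs_def] borel_prod[symmetric] by measurable
  define \<pi> where "\<pi> = distr \<mu> borel f"
  have tot: "emeasure \<mu> UNIV = 1"
  proof -
    have "emeasure \<mu> UNIV = (\<integral>\<^sup>+x. ennreal (rho x) \<partial>lborel)"
      unfolding \<mu>_def by (subst emeasure_density) auto
    also have "\<dots> = ennreal (LINT x|lborel. rho x)"
      by (rule nn_integral_eq_integral[OF int]) (simp add: nn)
    finally show ?thesis using one by simp
  qed
  have d1: "distr \<pi> borel fst = dens_measure (tomo_proj R1 rho)"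
  proof -
    have "distr \<pi> borel fst = distr \<mu> borel (\<lambda>x. P2 (R1 *v x))"
      unfolding \<pi>_def by (subst distr_distr) (auto simp: comp_def f_def \<mu>_def)
    also have "\<dots> = dens_measure (tomo_proj R1 rho)"
      unfolding \<mu>_def by (rule proj_density[OF oR1 rmb nn int])
    finally show ?thesis .
  qed
  have d2: "distr \<pi> borel snd = dens_measure (rot2 g (tomo_proj R2 rho))"
  proof -
    have "distr \<pi> borel snd = distr \<mu> borel (\<lambda>x. P2 ((M ** R2) *v x))"
      unfolding \<pi>_def by (subst distr_distr) (auto simp: comp_def f_def \<mu>_def)
    also have "\<dots> = dens_measure (tomo_proj (M ** R2) rho)"
      unfolding \<mu>_def by (rule proj_density[OF oMR rmb nn int])
    finally show ?thesis by (simp add: rot)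
  qed
  have cpl: "\<pi> \<in> couplings (dens_measure (tomo_proj R1 rho)) (dens_measure (rot2 g (tomo_proj R2 rho)))"
    unfolding couplings_def
  proof (intro CollectI conjI d1 d2)
    show "prob_space \<pi>"
    proof
      show "emeasure \<pi> (space \<pi>) = 1"
        unfolding \<pi>_def using tot by (simp add: emeasure_distr \<mu>_def)
    qed
    show "sets \<pi> = sets borel" by (simp add: \<pi>_def)
  qed
  have pw: "ennreal (rho x) * ennreal (norm (fst (f x) - snd (f x))) \<le> ennreal (rho x) * ennreal (norm (u - v))" for x
  proof (cases "norm x > 1")
    case True thus ?thesis using supp by simp
  next
    case False
    have "(M ** R2) *v x = R1 *v (transpose S *v x)"
      unfolding M_def matrix_vector_mul_assoc[symmetric] orth_TA[OF oR2] ..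
    hence "fst (f x) - snd (f x) = P2 (R1 *v (x - transpose S *v x))"
      by (simp add: f_def P2_diff matrix_vector_mult_diff_distrib)
    hence "norm (fst (f x) - snd (f x)) \<le> norm (x - transpose S *v x)"
      using norm_P2 orth_norm[OF oR1] by metis
    also have "x - transpose S *v x = S *v (transpose S *v x) - transpose S *v x"
      by (simp only: orth_AT[OF oS])
    also have "norm \<dots> \<le> norm (u - v) * norm (transpose S *v x)"
      using S(3)[of "transpose S *v x"] by (simp add: norm_minus_commute)
    also have "\<dots> = norm (u - v) * norm x"
      using orth_norm[OF iffD2[OF orthogonal_matrix_transpose oS]] by simp
    also have "\<dots> \<le> norm (u - v)" using False by (simp add: mult_left_le)
    finally show ?thesis by (intro mult_left_mono ennreal_leI) auto
  qed
  have cost: "(\<integral>\<^sup>+p. ennreal (norm (fst p - snd p)) \<partial>\<pi>) \<le> ennreal (norm (u - v))"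
  proof -
    have "(\<integral>\<^sup>+p. ennreal (norm (fst p - snd p)) \<partial>\<pi>) = (\<integral>\<^sup>+x. ennreal (norm (fst (f x) - snd (f x))) \<partial>\<mu>)"
      unfolding \<pi>_def by (subst nn_integral_distr) (auto simp: \<mu>_def)
    also have "\<dots> = (\<integral>\<^sup>+x. ennreal (rho x) * ennreal (norm (fst (f x) - snd (f x))) \<partial>lborel)"
      unfolding \<mu>_def by (subst nn_integral_density) auto
    also have "\<dots> \<le> (\<integral>\<^sup>+x. ennreal (rho x) * ennreal (norm (u - v)) \<partial>lborel)"
      by (rule nn_integral_mono) (rule pw)
    also have "\<dots> = (\<integral>\<^sup>+x. ennreal (rho x) \<partial>lborel) * ennreal (norm (u - v))"
      by (rule nn_integral_multc) simp
    also have "(\<integral>\<^sup>+x. ennreal (rho x) \<partial>lborel) = 1"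
      using tot unfolding \<mu>_def by (subst (asm) emeasure_density) auto
    finally show ?thesis by simp
  qed
  have "W1R (tomo_proj R1 rho) (tomo_proj R2 rho)
      \<le> W1 (dens_measure (tomo_proj R1 rho)) (dens_measure (rot2 g (tomo_proj R2 rho)))"
    unfolding W1R_def using rg by (intro INF_lower) simp
  also have "\<dots> \<le> (\<integral>\<^sup>+p. ennreal (norm (fst p - snd p)) \<partial>\<pi>)"
    unfolding W1_def by (rule INF_lower[OF cpl])
  also have "\<dots> \<le> ennreal (norm (u - v))" by (rule cost)
  also have "\<dots> = ennreal (2 * sin (vec_angle u v / 2))" using angle_eq(1)[OF assms(6,7)] by simp
  finally show ?thesis using angle_eq(2)[OF assms(6,7)] by simp
qed

end
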